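(* Let $R=k[x_1,\dots,x_m]$ be a polynomial ring over a field $k$, let $I$ be a monomial ideal and $J\subseteq R$ an ideal, and let $I:\langle J\rangle=\bigcup_{r\ge0}(I:J^r)$. Let $f$ and $f'$ be the least common multiples of the minimal generating monomials of $I$ and of $I:\langle J\rangle$, respectively. Then $f'$ divides $f$. *)

theory Defs
  imports Main "HOL-Library.Poly_Mapping"
begin

text \<open>The polynomial ring k[x_1,...,x_m]: the variables are the elements of a
finite type 'n (with CARD('n) = m), exponent vectors are finitely supported maps 'n to nat,
and a polynomial is a finitely supported map from exponent vectors to k.\<close>

type_synonym ('n, 'k) mpoly = "('n \<Rightarrow>\<^sub>0 nat) \<Rightarrow>\<^sub>0 'k"

definition is_ideal :: "'a::comm_ring_1 set \<Rightarrow> bool" where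
  "is_ideal I \<longleftrightarrow> 0 \<in> I \<and> (\<forall>a\<in>I. \<forall>b\<in>I. a + b \<in> I) \<and> (\<forall>r. \<forall>a\<in>I. r * a \<in> I)"

definition ideal_gen :: "'a::comm_ring_1 set \<Rightarrow> 'a set" where
  "ideal_gen S = \<Inter> {I. is_ideal I \<and> S \<subseteq> I}"

fun ideal_pow :: "'a::comm_ring_1 set \<Rightarrow> nat \<Rightarrow> 'a set" where
  "ideal_pow J 0 = UNIV"
| "ideal_pow J (Suc r) = ideal_gen {a * b | a b. a \<in> ideal_pow J r \<and> b \<in> J}"

definition ideal_quot :: "'a::comm_ring_1 set \<Rightarrow> 'a set \<Rightarrow> 'a set" where
  "ideal_quot I K = {h. \<forall>g\<in>K. h * g \<in> I}"

definition saturation :: "'a::comm_ring_1 set \<Rightarrow> 'a set \<Rightarrow> 'a set" where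
  "saturation I J = (\<Union>r. ideal_quot I (ideal_pow J r))"

definition monom :: "('n \<Rightarrow>\<^sub>0 nat) \<Rightarrow> ('n, 'k::comm_ring_1) mpoly" where
  "monom \<alpha> = Poly_Mapping.single \<alpha> 1"

definition is_monomial :: "('n, 'k::comm_ring_1) mpoly \<Rightarrow> bool" where
  "is_monomial p \<longleftrightarrow> (\<exists>\<alpha>. p = monom \<alpha>)"

definition monomial_ideal :: "('n, 'k::comm_ring_1) mpoly set \<Rightarrow> bool" where
  "monomial_ideal I \<longleftrightarrow> is_ideal I \<and> I = ideal_gen {p \<in> I. is_monomial p}"

definition min_gen_monomials :: "('n, 'k::comm_ring_1) mpoly set \<Rightarrow> ('n, 'k) mpoly set" where
  "min_gen_monomials I = {p. is_monomial p \<and> p \<in> I \<and>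
      (\<forall>q. is_monomial q \<and> q \<in> I \<and> q dvd p \<longrightarrow> q = p)}"

definition is_lcm_of :: "'a::comm_ring_1 set \<Rightarrow> 'a \<Rightarrow> bool" where
  "is_lcm_of S f \<longleftrightarrow> (\<forall>s\<in>S. s dvd f) \<and> (\<forall>g. (\<forall>s\<in>S. s dvd g) \<longrightarrow> f dvd g)"

end

theory Submission
  imports Defs
begin

definition ple :: "('n \<Rightarrow>\<^sub>0 nat) \<Rightarrow> ('n \<Rightarrow>\<^sub>0 nat) \<Rightarrow> bool" where
  "ple c s \<longleftrightarrow> (\<forall>i. Poly_Mapping.lookup c i \<le> Poly_Mapping.lookup s i)"

lemma sum_lookup_when:
  fixes g :: "'a \<Rightarrow>\<^sub>0 'b::comm_monoid_add"
  shows "(\<Sum>s\<in>Poly_Mapping.keys g. Poly_Mapping.lookup g s when s = k) = Poly_Mapping.lookup g k"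
proof (cases "k \<in> Poly_Mapping.keys g")
  case True
  have "(\<Sum>s\<in>Poly_Mapping.keys g. Poly_Mapping.lookup g s when s = k) = (\<Sum>s\<in>Poly_Mapping.keys g. if s = k then Poly_Mapping.lookup g s else 0)"
    by (simp add: when_def)
  also have "\<dots> = Poly_Mapping.lookup g k" using True by (simp add: sum.delta)
  finally show ?thesis .
next
  case False
  then have "Poly_Mapping.lookup g k = 0" by (simp add: in_keys_iff)
  moreover have "(\<Sum>s\<in>Poly_Mapping.keys g. Poly_Mapping.lookup g s when s = k) = 0"
    using False by (intro sum.neutral) (auto simp: when_def)
  ultimately show ?thesis by (simp only:)
qed

lemma sum_repr:
  fixes g :: "'a \<Rightarrow>\<^sub>0 'b::comm_monoid_add"
  shows "(\<Sum>s\<in>Poly_Mapping.keys g. Poly_Mapping.single s (Poly_Mapping.lookup g s)) = g"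
  by (rule poly_mapping_eqI) (simp add: lookup_sum lookup_single sum_lookup_when)

lemma monom_mult:
  fixes g :: "('n, 'k::comm_ring_1) mpoly"
  shows "monom c * g = (\<Sum>s\<in>Poly_Mapping.keys g. Poly_Mapping.single (c + s) (Poly_Mapping.lookup g s))"
proof -
  have "monom c * g = monom c * (\<Sum>s\<in>Poly_Mapping.keys g. Poly_Mapping.single s (Poly_Mapping.lookup g s))"
    by (simp only: sum_repr)
  also have "\<dots> = (\<Sum>s\<in>Poly_Mapping.keys g. Poly_Mapping.single (c + s) (Poly_Mapping.lookup g s))"
    by (simp add: sum_distrib_left monom_def mult_single)
  finally show ?thesis .
qed

lemma lookup_monom_mult:
  fixes g :: "('n, 'k::comm_ring_1) mpoly"
  shows "Poly_Mapping.lookup (monom c * g) (c + t) = Poly_Mapping.lookup g t"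
  by (simp add: monom_mult lookup_sum lookup_single sum_lookup_when)

lemma keys_monom_mult:
  fixes g :: "('n, 'k::comm_ring_1) mpoly"
  shows "Poly_Mapping.keys (monom c * g) = (\<lambda>t. c + t) ` Poly_Mapping.keys g"
proof
  show "Poly_Mapping.keys (monom c * g) \<subseteq> (\<lambda>t. c + t) ` Poly_Mapping.keys g"
    using keys_mult[of "monom c" g] by (auto simp: monom_def)
  show "(\<lambda>t. c + t) ` Poly_Mapping.keys g \<subseteq> Poly_Mapping.keys (monom c * g)"
    by (auto simp: in_keys_iff lookup_monom_mult)
qed

lemma ple_add: "ple c (c + t)"
  by (simp add: ple_def lookup_add)

lemma ple_add2: "ple c v \<Longrightarrow> ple c (u + v)"
  by (simp add: ple_def lookup_add le_add2 add_increasing)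

lemma ple_trans: "ple a b \<Longrightarrow> ple b c \<Longrightarrow> ple a c"
  unfolding ple_def using le_trans by blast

lemma ple_diff: "ple c s \<Longrightarrow> c + (s - c) = s"
  by (rule poly_mapping_eqI) (simp add: ple_def lookup_add lookup_minus)

lemma dvd_monom_iff:
  fixes g :: "('n, 'k::comm_ring_1) mpoly"
  shows "monom c dvd g \<longleftrightarrow> (\<forall>s\<in>Poly_Mapping.keys g. ple c s)"
proof
  assume "monom c dvd g"
  then obtain h where "g = monom c * h" by (auto simp: dvd_def)
  then show "\<forall>s\<in>Poly_Mapping.keys g. ple c s" by (auto simp: keys_monom_mult ple_add)
next
  assume H: "\<forall>s\<in>Poly_Mapping.keys g. ple c s"
  have "monom c * (\<Sum>s\<in>Poly_Mapping.keys g. Poly_Mapping.single (s - c) (Poly_Mapping.lookup g s))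
     = (\<Sum>s\<in>Poly_Mapping.keys g. Poly_Mapping.single (c + (s - c)) (Poly_Mapping.lookup g s))"
    by (simp add: sum_distrib_left monom_def mult_single)
  also have "\<dots> = (\<Sum>s\<in>Poly_Mapping.keys g. Poly_Mapping.single s (Poly_Mapping.lookup g s))"
    using H by (intro sum.cong) (auto simp: ple_diff)
  also have "\<dots> = g" by (rule sum_repr)
  finally show "monom c dvd g" by (metis dvdI)
qed

lemma monom_dvd_monom:
  "(monom c :: ('n, 'k::comm_ring_1) mpoly) dvd monom d \<longleftrightarrow> ple c d"
  using dvd_monom_iff[of c "monom d"] by (simp add: monom_def)

lemma ideal_sum:
  assumes "is_ideal I" "finite A" "\<And>x. x \<in> A \<Longrightarrow> f x \<in> I"
  shows "sum f A \<in> I"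
  using assms(2,3)
proof (induction A rule: finite_induct)
  case empty
  then show ?case using assms(1) by (simp add: is_ideal_def)
next
  case (insert x F)
  then show ?case using assms(1) by (simp add: is_ideal_def)
qed

lemma ideal_gen_least: "is_ideal T \<Longrightarrow> S \<subseteq> T \<Longrightarrow> ideal_gen S \<subseteq> T"
  unfolding ideal_gen_def by blast

lemma lemmaA:
  fixes I :: "('n, 'k::comm_ring_1) mpoly set"
  assumes "monomial_ideal I" "p \<in> I" "s \<in> Poly_Mapping.keys p"
  shows "\<exists>c. monom c \<in> I \<and> ple c s"
proof -
  define T where "T = {p :: ('n, 'k) mpoly. \<forall>s\<in>Poly_Mapping.keys p. \<exists>c. monom c \<in> I \<and> ple c s}"
  have "is_ideal T"
    unfolding is_ideal_def
  proof (intro conjI ballI allI)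
    show "0 \<in> T" by (simp add: T_def)
  next
    fix a b assume "a \<in> T" "b \<in> T"
    then show "a + b \<in> T" using keys_add[of a b] unfolding T_def by blast
  next
    fix r a assume "a \<in> T"
    show "r * a \<in> T" unfolding T_def mem_Collect_eq
    proof (intro ballI)
      fix s assume "s \<in> Poly_Mapping.keys (r * a)"
      then obtain u v where uv: "s = u + v" "v \<in> Poly_Mapping.keys a"
        using keys_mult[of r a] by blast
      then obtain c where "monom c \<in> I" "ple c v" using \<open>a \<in> T\<close> unfolding T_def by blast
      then show "\<exists>c. monom c \<in> I \<and> ple c s" using uv ple_add2 by blast
    qed
  qed
  moreover have "{p \<in> I. is_monomial p} \<subseteq> T"
    by (auto simp: T_def is_monomial_def monom_def ple_def)
  ultimately have "ideal_gen {p \<in> I. is_monomial p} \<subseteq> T" by (rule ideal_gen_least)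
  then have "I \<subseteq> T" using assms(1) by (simp add: monomial_ideal_def)
  then show ?thesis using assms(2,3) by (auto simp: T_def)
qed

lemma lemmaB:
  fixes I :: "('n, 'k::comm_ring_1) mpoly set"
  assumes "is_ideal I" "\<forall>s\<in>Poly_Mapping.keys p. monom s \<in> I"
  shows "p \<in> I"
proof -
  have "p = (\<Sum>s\<in>Poly_Mapping.keys p. Poly_Mapping.single 0 (Poly_Mapping.lookup p s) * monom s)"
    using sum_repr[of p] by (simp add: monom_def mult_single)
  also have "\<dots> \<in> I"
    using assms by (intro ideal_sum) (auto simp: is_ideal_def)
  finally show ?thesis .
qed

lemma lemma9:
  fixes I :: "('n, 'k::comm_ring_1) mpoly set"
  assumes "is_ideal I" "monom c \<in> I" "ple c d"
  shows "monom d \<in> I"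
proof -
  have "(monom d :: ('n, 'k) mpoly) = monom (d - c) * monom c"
    using ple_diff[OF assms(3)] by (simp add: monom_def mult_single add.commute)
  moreover have "monom (d - c) * monom c \<in> I"
    using assms(1,2) unfolding is_ideal_def by blast
  ultimately show ?thesis by (simp only:)
qed

lemma lemmaC:
  fixes I :: "('n::finite, 'k::comm_ring_1) mpoly set"
  shows "monom u \<in> I \<Longrightarrow> \<exists>c. monom c \<in> min_gen_monomials I \<and> ple c u"
proof (induction u rule: measure_induct_rule[where f = "\<lambda>u. \<Sum>i\<in>UNIV. Poly_Mapping.lookup u i"])
  case (less u)
  show ?case
  proof (cases "monom u \<in> min_gen_monomials I")
    case True
    then show ?thesis by (auto simp: ple_def)
  next
    case False
    then obtain q where q: "is_monomial q" "q \<in> I" "q dvd monom u" "q \<noteq> monom u"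
      using less.prems by (auto simp: min_gen_monomials_def is_monomial_def)
    then obtain d where d: "q = monom d" by (auto simp: is_monomial_def)
    have pd: "ple d u" using q(3) d monom_dvd_monom by blast
    have "d \<noteq> u" using q(4) d by auto
    then obtain i where i: "Poly_Mapping.lookup d i \<noteq> Poly_Mapping.lookup u i"
      by (metis poly_mapping_eqI)
    have lt: "Poly_Mapping.lookup d i < Poly_Mapping.lookup u i"
      using i pd unfolding ple_def by (metis le_neq_implies_less)
    have slt: "(\<Sum>i\<in>UNIV. Poly_Mapping.lookup d i) < (\<Sum>i\<in>UNIV. Poly_Mapping.lookup u i)"
    proof (rule sum_strict_mono_ex1)
      show "\<forall>x\<in>UNIV. Poly_Mapping.lookup d x \<le> Poly_Mapping.lookup u x"
        using pd unfolding ple_def by blast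
      show "\<exists>a\<in>UNIV. Poly_Mapping.lookup d a < Poly_Mapping.lookup u a"
        using lt by blast
    qed simp
    have md: "monom d \<in> I" using q(2) d by simp
    obtain c where c: "monom c \<in> min_gen_monomials I" "ple c d"
      using less.IH[OF slt md] by blast
    have "ple c u" using c(2) pd by (rule ple_trans)
    then show ?thesis using c(1) by blast
  qed
qed

theorem lemma2p8:
  fixes I J :: "('n::finite, 'k::field) mpoly set"
    and f f' :: "('n, 'k) mpoly"
  assumes "monomial_ideal I"
    and "is_ideal J"
    and "is_lcm_of (min_gen_monomials I) f"
    and "is_lcm_of (min_gen_monomials (saturation I J)) f'"
  shows "f' dvd f"
proof -
  have idI: "is_ideal I" using assms(1) by (simp add: monomial_ideal_def)
  have FactF: "ple c s" if "monom c \<in> min_gen_monomials I" "s \<in> Poly_Mapping.keys f" for c s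
    using assms(3) that unfolding is_lcm_of_def by (auto simp: dvd_monom_iff)
  have "x dvd f" if x: "x \<in> min_gen_monomials (saturation I J)" for x
  proof -
    obtain b where xb: "x = monom b" using x by (auto simp: min_gen_monomials_def is_monomial_def)
    have bS: "monom b \<in> saturation I J" and
      bmin: "\<And>q. is_monomial q \<Longrightarrow> q \<in> saturation I J \<Longrightarrow> q dvd monom b \<Longrightarrow> q = monom b"
      using x xb by (auto simp: min_gen_monomials_def)
    have "ple b s" if s: "s \<in> Poly_Mapping.keys f" for s
    proof (rule ccontr)
      assume "\<not> ple b s"
      then obtain j where j: "Poly_Mapping.lookup s j < Poly_Mapping.lookup b j" by (auto simp: ple_def not_le)
      define e :: "'n \<Rightarrow>\<^sub>0 nat" where "e = Poly_Mapping.single j 1"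
      define b' where "b' = b - e"
      have lb': "Poly_Mapping.lookup b' i = Poly_Mapping.lookup b i - (if i = j then 1 else 0)" for i
        by (simp add: b'_def e_def lookup_minus lookup_single when_def)
      have be: "b = e + b'"
        by (rule poly_mapping_eqI) (use j in \<open>auto simp: lookup_add lb' e_def lookup_single when_def\<close>)
      have mb: "(monom b :: ('n, 'k) mpoly) = monom e * monom b'"
        using be by (simp add: monom_def mult_single)
      obtain r where r: "\<And>g. g \<in> ideal_pow J r \<Longrightarrow> monom b * g \<in> I"
        using bS by (auto simp: saturation_def ideal_quot_def)
      have "monom b' * g \<in> I" if g: "g \<in> ideal_pow J r" for g
      proof (rule lemmaB[OF idI], intro ballI)
        fix t assume t: "t \<in> Poly_Mapping.keys (monom b' * g)"
        then obtain t0 where t0: "t = b' + t0" by (auto simp: keys_monom_mult)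
        have tj: "Poly_Mapping.lookup s j \<le> Poly_Mapping.lookup t j"
          using j by (simp add: t0 lookup_add lb')
        have "monom e * (monom b' * g) \<in> I" using r[OF g] mb by (simp add: mult.assoc)
        moreover have "e + t \<in> Poly_Mapping.keys (monom e * (monom b' * g))"
          using t by (simp add: keys_monom_mult)
        ultimately obtain c0 where c0: "monom c0 \<in> I" "ple c0 (e + t)"
          using lemmaA[OF assms(1)] by blast
        obtain c where c: "monom c \<in> min_gen_monomials I" "ple c c0"
          using lemmaC[OF c0(1)] by blast
        have "ple c s" using FactF[OF c(1) s] .
        have "ple c t"
          unfolding ple_def
        proof
          fix i
          show "Poly_Mapping.lookup c i \<le> Poly_Mapping.lookup t i"
          proof (cases "i = j")
            case True
            then show ?thesis using \<open>ple c s\<close> tj unfolding ple_def by (meson le_trans)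
          next
            case False
            have "ple c (e + t)" using c(2) c0(2) by (rule ple_trans)
            then have "Poly_Mapping.lookup c i \<le> Poly_Mapping.lookup (e + t) i" unfolding ple_def by blast
            then show ?thesis using False by (simp add: lookup_add e_def lookup_single when_def)
          qed
        qed
        have "monom c \<in> I" using c(1) by (simp add: min_gen_monomials_def)
        then show "monom t \<in> I" using lemma9[OF idI _ \<open>ple c t\<close>] by blast
      qed
      then have h1: "monom b' \<in> saturation I J"
        by (auto simp: saturation_def ideal_quot_def)
      have h2: "(monom b' :: ('n, 'k) mpoly) dvd monom b" using mb by simp
      have h3: "is_monomial (monom b' :: ('n, 'k) mpoly)"
        unfolding is_monomial_def by (rule exI[of _ b'], rule refl)
      have "(monom b' :: ('n, 'k) mpoly) = monom b"
        by (rule bmin[OF h3 h1 h2])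
      then have "ple b b'" using monom_dvd_monom[of b b', where ?'k = 'k] by simp
      then show False using j by (auto simp: ple_def lb' dest: spec[of _ j])
    qed
    then show ?thesis using xb by (simp add: dvd_monom_iff)
  qed
  then show ?thesis using assms(4) unfolding is_lcm_of_def by blast
qed

end
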